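(* Let $A=\mathbb{C}[x,y,z]$, let $s,t\in A\setminus\{0\}$ be coprime and equip $A$ with the Poisson bracket $\{x,y\}=t s_z-s t_z$, $\{y,z\}=t s_x-s t_x$, $\{z,x\}=t s_y-s t_y$. Let $p=(\alpha,\beta,\gamma)\in\mathbb{C}^3$ and $M=\langle x-\alpha,y-\beta,z-\gamma\rangle$. Then $M$ is a Poisson ideal if and only if either (1) $p$ is a common zero of $s$ and $t$, or (2) $p$ is a singular point of $f_{\lambda,\mu}:=\lambda s-\mu t$ for some $(\lambda,\mu)\in\mathbb{P}^1(\mathbb{C})$.
   Context: Subscripts denote partial derivatives. $p$ is a singular point of $f$ means $f(p)=f_x(p)=f_y(p)=f_z(p)=0$. An ideal $I$ is Poisson if $\{a,I\}\subseteq I$ for all $a\in A$. *)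

theory Defs
  imports Complex_Main "HOL-Computational_Algebra.Polynomial"
begin

text \<open>We model A = C[x,y,z] as the iterated polynomial ring C[x][y][z]:
  type complex poly poly poly, innermost variable x, middle y, outermost z.\<close>

type_synonym cpoly3 = "complex poly poly poly"

definition Xv :: cpoly3 where "Xv = [:[:[:0, 1:]:]:]"
definition Yv :: cpoly3 where "Yv = [:[:0, 1:]:]"
definition Zv :: cpoly3 where "Zv = [:0, 1:]"
definition cst :: "complex \<Rightarrow> cpoly3" where "cst c = [:[:[:c:]:]:]"

definition dx :: "cpoly3 \<Rightarrow> cpoly3" where "dx f = map_poly (map_poly pderiv) f"
definition dy :: "cpoly3 \<Rightarrow> cpoly3" where "dy f = map_poly pderiv f"
definition dz :: "cpoly3 \<Rightarrow> cpoly3" where "dz f = pderiv f"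

definition eval3 :: "cpoly3 \<Rightarrow> complex \<Rightarrow> complex \<Rightarrow> complex \<Rightarrow> complex" where
  "eval3 f a b c = poly (poly (poly f [:[:c:]:]) [:b:]) a"

definition singular_point :: "cpoly3 \<Rightarrow> complex \<Rightarrow> complex \<Rightarrow> complex \<Rightarrow> bool" where
  "singular_point f a b c \<longleftrightarrow>
     eval3 f a b c = 0 \<and> eval3 (dx f) a b c = 0 \<and> eval3 (dy f) a b c = 0 \<and> eval3 (dz f) a b c = 0"

text \<open>The Poisson bracket on A determined (as a biderivation) by
  {x,y} = t s_z - s t_z, {y,z} = t s_x - s t_x, {z,x} = t s_y - s t_y.\<close>
definition pbr :: "cpoly3 \<Rightarrow> cpoly3 \<Rightarrow> cpoly3 \<Rightarrow> cpoly3 \<Rightarrow> cpoly3" where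
  "pbr s t a b =
     (t * dz s - s * dz t) * (dx a * dy b - dy a * dx b)
   + (t * dx s - s * dx t) * (dy a * dz b - dz a * dy b)
   + (t * dy s - s * dy t) * (dz a * dx b - dx a * dz b)"

definition poisson_ideal :: "cpoly3 \<Rightarrow> cpoly3 \<Rightarrow> cpoly3 set \<Rightarrow> bool" where
  "poisson_ideal s t I \<longleftrightarrow> (\<forall>a b. b \<in> I \<longrightarrow> pbr s t a b \<in> I)"

definition max_ideal :: "complex \<Rightarrow> complex \<Rightarrow> complex \<Rightarrow> cpoly3 set" where
  "max_ideal a b c = {u * (Xv - cst a) + v * (Yv - cst b) + w * (Zv - cst c) | u v w. True}"

end

theory Submission
  imports Defs
begin

lemma eval3_simps[simp]:
  "eval3 (f + g) a b c = eval3 f a b c + eval3 g a b c"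
  "eval3 (f - g) a b c = eval3 f a b c - eval3 g a b c"
  "eval3 (f * g) a b c = eval3 f a b c * eval3 g a b c"
  "eval3 (cst l) a b c = l"
  "eval3 Xv a b c = a" "eval3 Yv a b c = b" "eval3 Zv a b c = c"
  by (simp_all add: eval3_def cst_def Xv_def Yv_def Zv_def)

lemma d_simps[simp]:
  "dx Xv = 1" "dy Xv = 0" "dz Xv = 0"
  "dx Yv = 0" "dy Yv = 1" "dz Yv = 0"
  "dx Zv = 0" "dy Zv = 0" "dz Zv = 1"
  "dx (cst l) = 0" "dy (cst l) = 0" "dz (cst l) = 0"
  by (simp_all add: dx_def dy_def dz_def Xv_def Yv_def Zv_def cst_def map_poly_pCons
      pderiv_pCons one_pCons)

lemma d_diff[simp]:
  "dx (f - g) = dx f - dx g" "dy (f - g) = dy f - dy g" "dz (f - g) = dz f - dz g"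
  by (simp_all add: dx_def dy_def dz_def poly_eq_iff coeff_map_poly pderiv_diff)

lemma d_cst[simp]:
  "dx (cst l * f) = cst l * dx f" "dy (cst l * f) = cst l * dy f" "dz (cst l * f) = cst l * dz f"
  by (simp_all add: dx_def dy_def dz_def poly_eq_iff coeff_map_poly pderiv_smult cst_def)

lemma d_cst'[simp]:
  "dx (f * cst l) = dx f * cst l" "dy (f * cst l) = dy f * cst l" "dz (f * cst l) = dz f * cst l"
  using d_cst[of l f] by (simp_all add: mult.commute)

lemma kernel:
  assumes "eval3 f a b c = 0"
  shows "f \<in> max_ideal a b c"
proof -
  define g where "g = poly f [:[:c:]:]"
  define h where "h = poly g [:b:]"
  have f: "f = [:-[:[:c:]:],1:] * synthetic_div f [:[:c:]:] + [:g:]"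
    unfolding g_def by (rule synthetic_div_correct'[symmetric])
  have g: "g = [:-[:b:],1:] * synthetic_div g [:b:] + [:h:]"
    unfolding h_def by (rule synthetic_div_correct'[symmetric])
  have h: "h = [:-a,1:] * synthetic_div h a + [:poly h a:]"
    by (rule synthetic_div_correct'[symmetric])
  have h0: "poly h a = 0" using assms by (simp add: eval3_def h_def g_def)
  have "f = [:[:[:-a,1:] * synthetic_div h a:]:] + [:[:-[:b:],1:] * synthetic_div g [:b:]:]
       + [:-[:[:c:]:],1:] * synthetic_div f [:[:c:]:]"
  proof -
    have pc: "\<And>x y :: 'a::comm_ring_1 poly. [:x + y:] = [:x:] + [:y:]" by simp
    have e1: "[:h:] = [:[:-a,1:] * synthetic_div h a:]" using h h0 by simp
    have e2: "[:g:] = [:[:-[:b:],1:] * synthetic_div g [:b:]:] + [:[:h:]:]"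
      using arg_cong[OF g, of "\<lambda>x. [:x:]"] pc by metis
    show ?thesis using f e1 e2 by (simp add: algebra_simps)
  qed
  also have "\<dots> = [:[:synthetic_div h a:]:] * (Xv - cst a) + [:synthetic_div g [:b:]:] * (Yv - cst b)
       + synthetic_div f [:[:c:]:] * (Zv - cst c)"
    by (simp add: Xv_def Yv_def Zv_def cst_def algebra_simps)
  finally show ?thesis unfolding max_ideal_def by blast
qed

lemma ideal_eval: "f \<in> max_ideal a b c \<Longrightarrow> eval3 f a b c = 0"
  unfolding max_ideal_def by auto

theorem lemma3p5:
  fixes s t :: cpoly3 and \<alpha> \<beta> \<gamma> :: complex
  assumes "s \<noteq> 0" and "t \<noteq> 0" and "coprime s t"
  shows "poisson_ideal s t (max_ideal \<alpha> \<beta> \<gamma>) \<longleftrightarrow>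
    ((eval3 s \<alpha> \<beta> \<gamma> = 0 \<and> eval3 t \<alpha> \<beta> \<gamma> = 0) \<or>
     (\<exists>l m. (l, m) \<noteq> (0, 0) \<and>
        singular_point (cst l * s - cst m * t) \<alpha> \<beta> \<gamma>))"
proof -
  let ?e = "\<lambda>f. eval3 f \<alpha> \<beta> \<gamma>"
  let ?C = "?e (t * dz s - s * dz t)"
  let ?A = "?e (t * dx s - s * dx t)"
  let ?B = "?e (t * dy s - s * dy t)"
  have step1: "poisson_ideal s t (max_ideal \<alpha> \<beta> \<gamma>) \<longleftrightarrow> ?A = 0 \<and> ?B = 0 \<and> ?C = 0"
  proof
    assume P: "poisson_ideal s t (max_ideal \<alpha> \<beta> \<gamma>)"
    have mx: "Xv - cst \<alpha> \<in> max_ideal \<alpha> \<beta> \<gamma>" "Yv - cst \<beta> \<in> max_ideal \<alpha> \<beta> \<gamma>"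
      "Zv - cst \<gamma> \<in> max_ideal \<alpha> \<beta> \<gamma>"
      unfolding max_ideal_def
      apply (rule CollectI, rule exI[of _ 1], rule exI[of _ 0], rule exI[of _ 0], simp)
      apply (rule CollectI, rule exI[of _ 0], rule exI[of _ 1], rule exI[of _ 0], simp)
      apply (rule CollectI, rule exI[of _ 0], rule exI[of _ 0], rule exI[of _ 1], simp)
      done
    have "?e (pbr s t Yv (Xv - cst \<alpha>)) = 0" "?e (pbr s t Zv (Xv - cst \<alpha>)) = 0"
      "?e (pbr s t Zv (Yv - cst \<beta>)) = 0"
      using P mx by (auto simp: poisson_ideal_def intro: ideal_eval)
    thus "?A = 0 \<and> ?B = 0 \<and> ?C = 0" by (simp add: pbr_def)
  next
    assume "?A = 0 \<and> ?B = 0 \<and> ?C = 0"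
    thus "poisson_ideal s t (max_ideal \<alpha> \<beta> \<gamma>)"
      unfolding poisson_ideal_def
    proof (intro allI impI)
      fix a b assume "b \<in> max_ideal \<alpha> \<beta> \<gamma>"
      have "?e (pbr s t a b) = 0" using \<open>?A = 0 \<and> ?B = 0 \<and> ?C = 0\<close>
        unfolding pbr_def eval3_simps by simp
      thus "pbr s t a b \<in> max_ideal \<alpha> \<beta> \<gamma>" by (rule kernel)
    qed
  qed
  show ?thesis
    unfolding step1 singular_point_def
  proof
    assume H: "?A = 0 \<and> ?B = 0 \<and> ?C = 0"
    show "(?e s = 0 \<and> ?e t = 0) \<or> (\<exists>l m. (l, m) \<noteq> (0, 0) \<and>
        ?e (cst l * s - cst m * t) = 0 \<and> ?e (dx (cst l * s - cst m * t)) = 0 \<and>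
        ?e (dy (cst l * s - cst m * t)) = 0 \<and> ?e (dz (cst l * s - cst m * t)) = 0)"
    proof (cases "?e s = 0 \<and> ?e t = 0")
      case False
      show ?thesis
        apply (rule disjI2, rule exI[of _ "?e t"], rule exI[of _ "?e s"])
        using False H by (auto simp: algebra_simps)
    qed simp
  next
    assume "(?e s = 0 \<and> ?e t = 0) \<or> (\<exists>l m. (l, m) \<noteq> (0, 0) \<and>
        ?e (cst l * s - cst m * t) = 0 \<and> ?e (dx (cst l * s - cst m * t)) = 0 \<and>
        ?e (dy (cst l * s - cst m * t)) = 0 \<and> ?e (dz (cst l * s - cst m * t)) = 0)"
    thus "?A = 0 \<and> ?B = 0 \<and> ?C = 0"
    proof
      assume "?e s = 0 \<and> ?e t = 0" thus ?thesis by simp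
    next
      assume "\<exists>l m. (l, m) \<noteq> (0, 0) \<and>
        ?e (cst l * s - cst m * t) = 0 \<and> ?e (dx (cst l * s - cst m * t)) = 0 \<and>
        ?e (dy (cst l * s - cst m * t)) = 0 \<and> ?e (dz (cst l * s - cst m * t)) = 0"
      then obtain l m where lm: "(l, m) \<noteq> (0, 0)" "l * ?e s = m * ?e t"
        "l * ?e (dx s) = m * ?e (dx t)" "l * ?e (dy s) = m * ?e (dy t)"
        "l * ?e (dz s) = m * ?e (dz t)" by auto
      show ?thesis
      proof (cases "l = 0")
        case True
        with lm have "m \<noteq> 0" by auto
        with lm True show ?thesis by simp
      next
        case False
        have k: "\<And>u v :: complex. l * (?e t * u - ?e s * v) = ?e t * (l * u - m * v) - v * (l * ?e s - m * ?e t)"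
          by (simp add: algebra_simps)
        have "l * (?e t * ?e (dx s) - ?e s * ?e (dx t)) = 0"
             "l * (?e t * ?e (dy s) - ?e s * ?e (dy t)) = 0"
             "l * (?e t * ?e (dz s) - ?e s * ?e (dz t)) = 0"
          unfolding k using lm by simp_all
        with False show ?thesis by simp
      qed
    qed
  qed
qed

end
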